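(* For every $n\ge 1$, the $\mathbb{Z}$-discriminating complexity of $\mathbb{Z}^n$ is asymptotically dominated by a polynomial of degree $n-1$, i.e. $C_{\mathbb{Z}^n}^{\mathbb{Z}} \preceq (R\mapsto R^{n-1})$.
   Context: A homomorphism $\phi: G \to H$ discriminates a finite set $S\subseteq G-\{1\}$ if $1\notin\phi(S)$. For finite generating sets $X$ of $G$, $Y$ of $H$, $|\phi|_X^Y := \max_{x\in X}|\phi(x)|_Y$, and $C_{G,X}^{H,Y}(R) := \min\{|\phi|_X^Y : \phi \text{ discriminates } B_R(G,X)-\{1\}\}$, with $B_R(G,X)$ the closed word-metric ball of radius $R$. For $f,g:\mathbb{N}\to\mathbb{N}$, $f\preceq g$ means there is $K$ with $f(R)\le Kg(KR)+K$ for all $R$; the $\preceq$-class of $C_{G,X}^{H,Y}$ is independent of $X,Y$ and denoted $C_G^H$. *)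

theory Defs
  imports "HOL-Analysis.Analysis"
begin

definition word_length :: "'a::ab_group_add set \<Rightarrow> 'a \<Rightarrow> nat" where
  "word_length X g = (LEAST k. \<exists>xs. length xs = k \<and> set xs \<subseteq> X \<union> uminus ` X \<and> sum_list xs = g)"

definition word_ball :: "'a::ab_group_add set \<Rightarrow> nat \<Rightarrow> 'a set" where
  "word_ball X R = {g. word_length X g \<le> R}"

definition is_hom :: "('a::ab_group_add \<Rightarrow> 'b::ab_group_add) \<Rightarrow> bool" where
  "is_hom \<phi> \<longleftrightarrow> (\<forall>x y. \<phi> (x + y) = \<phi> x + \<phi> y)"

definition discriminates :: "('a::ab_group_add \<Rightarrow> 'b::ab_group_add) \<Rightarrow> 'a set \<Rightarrow> bool" where
  "discriminates \<phi> S \<longleftrightarrow> 0 \<notin> \<phi> ` S"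

text \<open>The size |phi|_X^Y (X finite, nonempty).\<close>
definition hom_size :: "'a::ab_group_add set \<Rightarrow> 'b::ab_group_add set \<Rightarrow> ('a \<Rightarrow> 'b) \<Rightarrow> nat" where
  "hom_size X Y \<phi> = Max ((\<lambda>x. word_length Y (\<phi> x)) ` X)"

definition disc_complexity :: "'a::ab_group_add set \<Rightarrow> 'b::ab_group_add set \<Rightarrow> nat \<Rightarrow> nat" where
  "disc_complexity X Y R = (LEAST c. \<exists>\<phi>::'a \<Rightarrow> 'b. is_hom \<phi> \<and>
      discriminates \<phi> (word_ball X R - {0}) \<and> hom_size X Y \<phi> = c)"

definition dom_preceq :: "(nat \<Rightarrow> nat) \<Rightarrow> (nat \<Rightarrow> nat) \<Rightarrow> bool" where
  "dom_preceq f g \<longleftrightarrow> (\<exists>K. \<forall>R. f R \<le> K * g (K * R) + K)"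

end

theory Submission
  imports Defs
begin

lemma wl_int: "word_length {1::int} m \<le> nat \<bar>m\<bar>"
  unfolding word_length_def
proof (rule Least_le)
  show "\<exists>xs. length xs = nat \<bar>m\<bar> \<and> set xs \<subseteq> {1} \<union> uminus ` {1} \<and> sum_list xs = m"
    by (rule exI[of _ "replicate (nat \<bar>m\<bar>) (sgn m)"])
       (auto simp: sum_list_replicate sgn_if)
qed

lemma sum_rep_axis: "sum_list (replicate k (axis i s)) = axis i (int k * s)"
  by (induction k) (auto simp: axis_def vec_eq_iff algebra_simps)

lemma abs_sgn_mult: "int (nat \<bar>m\<bar>) * sgn m = (m::int)"
  by (simp add: sgn_if)

lemma abs_sgn_mult2: "\<bar>m\<bar> * sgn m = (m::int)"
  by (simp add: sgn_if)

lemma rep_axis: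
  "\<exists>xs. set xs \<subseteq> range (\<lambda>i::'n::finite. axis i (1::int)) \<union> uminus ` range (\<lambda>i. axis i 1)
     \<and> sum_list xs = axis i m"
proof (cases "m = 0")
  case True then show ?thesis by (intro exI[of _ "[]"]) (auto simp: axis_def vec_eq_iff)
next
  case False
  have mem: "axis i (sgn m) \<in> range (\<lambda>i::'n. axis i (1::int)) \<union> uminus ` range (\<lambda>i. axis i 1)"
  proof (cases "m > 0")
    case True then show ?thesis by auto
  next
    case f: False
    with False have "sgn m = -1" by auto
    then have "axis i (sgn m) = - axis i (1::int)" by (simp add: axis_def vec_eq_iff)
    then show ?thesis by auto
  qed
  show ?thesis
    by (rule exI[of _ "replicate (nat \<bar>m\<bar>) (axis i (sgn m))"])
       (use mem in \<open>auto simp: sum_rep_axis abs_sgn_mult abs_sgn_mult2\<close>)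
qed

lemma rep_sum:
  fixes f :: "'b \<Rightarrow> 'a::ab_group_add"
  assumes "finite S" "\<And>s. s \<in> S \<Longrightarrow> \<exists>xs. set xs \<subseteq> A \<and> sum_list xs = f s"
  shows "\<exists>xs. set xs \<subseteq> A \<and> sum_list xs = sum f S"
  using assms
proof (induction S rule: finite_induct)
  case empty then show ?case by (intro exI[of _ "[]"]) auto
next
  case (insert x F)
  then obtain xs ys where "set xs \<subseteq> A" "sum_list xs = f x" "set ys \<subseteq> A" "sum_list ys = sum f F"
    by blast
  then show ?case using insert by (intro exI[of _ "xs @ ys"]) auto
qed

lemma basis_exp: "(\<Sum>i\<in>UNIV. axis i (g $ i)) = (g :: int ^ 'n::finite)"
  by (simp add: vec_eq_iff sum_component axis_def)

lemma rep_exists: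
  "\<exists>xs. set xs \<subseteq> range (\<lambda>i::'n::finite. axis i (1::int)) \<union> uminus ` range (\<lambda>i. axis i 1)
     \<and> sum_list xs = g"
proof -
  have "\<exists>xs. set xs \<subseteq> range (\<lambda>i::'n::finite. axis i (1::int)) \<union> uminus ` range (\<lambda>i. axis i 1)
     \<and> sum_list xs = (\<Sum>i\<in>UNIV. axis i (g $ i))"
    by (rule rep_sum) (auto intro: rep_axis)
  then show ?thesis by (simp add: basis_exp)
qed

lemma l1_bound:
  "set xs \<subseteq> range (\<lambda>i::'n::finite. axis i (1::int)) \<union> uminus ` range (\<lambda>i. axis i 1)
   \<Longrightarrow> (\<Sum>j\<in>UNIV. \<bar>sum_list xs $ j\<bar>) \<le> int (length xs)"
proof (induction xs)
  case Nil then show ?case by simp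
next
  case (Cons a xs)
  have a1: "(\<Sum>j\<in>UNIV. \<bar>a $ j\<bar>) = 1"
  proof -
    obtain i where "a = axis i 1 \<or> a = - axis i 1" using Cons.prems by auto
    then have "\<And>j. \<bar>a $ j\<bar> = (if j = i then 1 else 0)" by (auto simp: axis_def)
    then show ?thesis by simp
  qed
  have "(\<Sum>j\<in>UNIV. \<bar>sum_list (a # xs) $ j\<bar>) \<le> (\<Sum>j\<in>UNIV. \<bar>a $ j\<bar> + \<bar>sum_list xs $ j\<bar>)"
    by (rule sum_mono) (simp add: abs_triangle_ineq)
  also have "\<dots> = 1 + (\<Sum>j\<in>UNIV. \<bar>sum_list xs $ j\<bar>)" by (simp add: sum.distrib a1)
  also have "\<dots> \<le> int (length (a # xs))" using Cons by simp
  finally show ?case .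
qed

lemma digits_zero:
  fixes c :: "nat \<Rightarrow> int" and R :: int
  assumes "\<forall>k<n. \<bar>c k\<bar> \<le> R" "(\<Sum>k<n. c k * (2*R+1)^k) = 0"
  shows "\<forall>k<n. c k = 0"
  using assms
proof (induction n arbitrary: c)
  case 0 then show ?case by simp
next
  case (Suc n)
  let ?b = "2*R+1"
  have R0: "R \<ge> 0" using Suc.prems(1) by fastforce
  have split: "(\<Sum>k<Suc n. c k * ?b^k) = c 0 + ?b * (\<Sum>k<n. c (Suc k) * ?b^k)"
    unfolding sum.lessThan_Suc_shift by (simp add: sum_distrib_left mult.assoc mult.left_commute)
  have e: "c 0 + ?b * (\<Sum>k<n. c (Suc k) * ?b^k) = 0" using Suc.prems(2) split by simp
  have "?b dvd c 0"
    by (metis add.commute dvd_minus_iff dvd_triv_left e eq_neg_iff_add_eq_0)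
  moreover have "\<bar>c 0\<bar> < ?b" using Suc.prems(1) R0 by force
  ultimately have c0: "c 0 = 0"
  proof -
    assume d: "?b dvd c 0" and l: "\<bar>c 0\<bar> < ?b"
    from d obtain q where q: "c 0 = ?b * q" by blast
    show ?thesis
    proof (rule ccontr)
      assume "c 0 \<noteq> 0"
      then have "q \<noteq> 0" using q by auto
      then have "\<bar>q\<bar> \<ge> 1" by linarith
      then have "\<bar>c 0\<bar> \<ge> ?b" using q R0 by (simp add: abs_mult)
      with l show False by simp
    qed
  qed
  with e R0 have "(\<Sum>k<n. c (Suc k) * ?b^k) = 0" by simp
  moreover have "\<forall>k<n. \<bar>c (Suc k)\<bar> \<le> R" using Suc.prems(1) by simp
  ultimately have "\<forall>k<n. c (Suc k) = 0" using Suc.IH[of "\<lambda>k. c (Suc k)"] by blast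
  then show ?case using c0 by (metis less_Suc_eq_0_disj)
qed

theorem mainTheorem8:
  shows "dom_preceq
     (disc_complexity (range (\<lambda>i::'n::finite. axis i (1::int))) {1::int})
     (\<lambda>R. R ^ (CARD('n) - 1))"
  unfolding dom_preceq_def
proof (intro exI[of _ 3] allI)
  fix R :: nat
  define X where "X = range (\<lambda>i::'n::finite. axis i (1::int))"
  define n where "n = CARD('n)"
  define b :: int where "b = 2 * int R + 1"
  obtain ind where ind: "bij_betw ind (UNIV::'n set) {0..<n}"
    using ex_bij_betw_finite_nat[of "UNIV::'n set"] unfolding n_def by auto
  define \<phi> :: "int^'n \<Rightarrow> int" where "\<phi> g = (\<Sum>i\<in>UNIV. g $ i * b ^ ind i)" for g
  have hom: "is_hom \<phi>" unfolding is_hom_def \<phi>_def by (simp add: sum.distrib algebra_simps)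
  have disc: "discriminates \<phi> (word_ball X R - {0})"
    unfolding discriminates_def
  proof
    assume "0 \<in> \<phi> ` (word_ball X R - {0})"
    then obtain g where g0: "g \<in> word_ball X R - {0}" "0 = \<phi> g"
      by (rule imageE)
    then have g: "word_length X g \<le> R" "g \<noteq> 0" "\<phi> g = 0"
      unfolding word_ball_def by auto
    have "\<exists>xs. length xs = word_length X g \<and> set xs \<subseteq> X \<union> uminus ` X \<and> sum_list xs = g"
      unfolding word_length_def
      by (rule LeastI_ex) (use rep_exists[of g] in \<open>auto simp: X_def\<close>)
    then obtain xs where xs0: "length xs = word_length X g" "set xs \<subseteq> X \<union> uminus ` X" "sum_list xs = g"
      by blast
    then have xs: "length xs \<le> R" "set xs \<subseteq> X \<union> uminus ` X" "sum_list xs = g"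
      using g(1) by auto
    have "(\<Sum>j\<in>UNIV. \<bar>g $ j\<bar>) \<le> int R"
      using l1_bound[OF xs(2)[unfolded X_def]] xs by simp
    then have bnd: "\<And>j. \<bar>g $ j\<bar> \<le> int R"
    proof -
      fix j
      have "\<bar>g $ j\<bar> \<le> (\<Sum>j\<in>UNIV. \<bar>g $ j\<bar>)" by (rule member_le_sum) auto
      then show "\<bar>g $ j\<bar> \<le> int R" using \<open>(\<Sum>j\<in>UNIV. \<bar>g $ j\<bar>) \<le> int R\<close> by linarith
    qed
    define c where "c k = g $ (inv_into UNIV ind k)" for k
    have cind: "c (ind j) = g $ j" for j
      unfolding c_def using ind by (simp add: bij_betw_def)
    have "(\<Sum>k<n. c k * b ^ k) = (\<Sum>j\<in>UNIV. c (ind j) * b ^ ind j)"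
      using sum.reindex_bij_betw[OF ind, of "\<lambda>k. c k * b ^ k"] by (simp add: atLeast0LessThan)
    also have "\<dots> = \<phi> g" unfolding \<phi>_def cind ..
    finally have "(\<Sum>k<n. c k * (2 * int R + 1) ^ k) = 0" using g(3) b_def by simp
    moreover have "\<forall>k<n. \<bar>c k\<bar> \<le> int R" unfolding c_def using bnd by simp
    ultimately have "\<forall>k<n. c k = 0" using digits_zero by blast
    then have "g $ j = 0" for j
    proof -
      have "ind j < n" using ind by (auto simp: bij_betw_def)
      then show ?thesis using cind[of j] \<open>\<forall>k<n. c k = 0\<close> by simp
    qed
    then show False using g(2) by (simp add: vec_eq_iff)
  qed
  have hs: "hom_size X {1} \<phi> \<le> (2 * R + 1) ^ (n - 1)"
    unfolding hom_size_def
  proof (subst Max_le_iff)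
    show "finite ((\<lambda>x. word_length {1} (\<phi> x)) ` X)" by (simp add: X_def)
    show "(\<lambda>x. word_length {1} (\<phi> x)) ` X \<noteq> {}" by (simp add: X_def)
    show "\<forall>a\<in>(\<lambda>x. word_length {1} (\<phi> x)) ` X. a \<le> (2 * R + 1) ^ (n - 1)"
    proof
      fix a assume "a \<in> (\<lambda>x. word_length {1} (\<phi> x)) ` X"
      then obtain i where a: "a = word_length {1} (\<phi> (axis i 1))" by (auto simp: X_def)
      have "\<phi> (axis i 1) = b ^ ind i"
      proof -
        have "(\<lambda>j. (axis i (1::int)) $ j * b ^ ind j) = (\<lambda>j. if j = i then b ^ ind i else 0)"
          by (auto simp: axis_def)
        then show ?thesis unfolding \<phi>_def by (simp only:) simp
      qed
      then have "a \<le> nat \<bar>b ^ ind i\<bar>" using a wl_int by simp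
      also have "\<dots> = (2 * R + 1) ^ ind i"
      proof -
        have "b ^ ind i = int ((2 * R + 1) ^ ind i)" unfolding b_def by (simp add: add.commute)
        then show ?thesis by (simp only: abs_of_nat nat_int)
      qed
      also have "\<dots> \<le> (2 * R + 1) ^ (n - 1)"
      proof (intro power_increasing)
        have "ind i \<in> {0..<n}" using ind by (auto simp: bij_betw_def)
        then show "ind i \<le> n - 1" by simp
      qed simp
      finally show "a \<le> (2 * R + 1) ^ (n - 1)" .
    qed
  qed
  have "disc_complexity X {1::int} R \<le> hom_size X {1} \<phi>"
    unfolding disc_complexity_def by (rule Least_le) (use hom disc in blast)
  also have "\<dots> \<le> (2 * R + 1) ^ (n - 1)" by (rule hs)
  also have "\<dots> \<le> 3 * (3 * R) ^ (n - 1) + 3"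
  proof (cases "R = 0")
    case True then show ?thesis by simp
  next
    case False
    then have "(2 * R + 1) ^ (n - 1) \<le> (3 * R) ^ (n - 1)" by (intro power_mono) auto
    then show ?thesis by linarith
  qed
  finally show "disc_complexity (range (\<lambda>i::'n::finite. axis i (1::int))) {1::int} R
      \<le> 3 * (3 * R) ^ (CARD('n) - 1) + 3" unfolding X_def n_def .
qed
end
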